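(* Let $n\ge2$, $z_{ij}\in\mathbb{C}$ with $|z_{ij}|=1$ for $1\le i<j\le n$, $z_{ji}=\overline{z_{ij}}$, and let $W^{(\mathbf z)}=\frac1n\sum_{i,j}e_{ij}\otimes R_n^{(\mathbf z)}(e_{ij})$. Let $\lambda_{\min}^{(\mathbf z)}<0$ be the smallest eigenvalue of $W^{(\mathbf z)}$ and $p_*=\frac{1}{1+n^2|\lambda_{\min}^{(\mathbf z)}|}$. Then the operator $\widetilde W^{(\mathbf z)}(p_* )=\frac{1-p_*}{n^2}\mathbb{I}_n\otimes\mathbb{I}_n+p_*W^{(\mathbf z)}$ is a separable state; equivalently the completely positive map $(1-p_* )\frac{1}{n}\mathbb{I}_n\operatorname{Tr}(\cdot)+p_*R_n^{(\mathbf z)}$ (the structural physical approximation of $R_n^{(\mathbf z)}$) is entanglement breaking.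
   Context: $e_{ij}=|e_i\rangle\langle e_j|$ for the standard basis of $\mathbb{C}^n$. $R_n^{(\mathbf z)}:M_n(\mathbb{C})\to M_n(\mathbb{C})$ is the linear map with $R_n^{(\mathbf z)}(e_{ii})=\frac{1}{n-1}(\mathbb{I}_n-e_{ii})$ and $R_n^{(\mathbf z)}(e_{ij})=-\frac{z_{ij}}{n-1}e_{ij}$ for $i\ne j$; it is unital and $\operatorname{Tr}W^{(\mathbf z)}=1$. For a Hermitian $W$ with trace one, $\widetilde W(p)=\frac{1-p}{n^2}\mathbb{I}\otimes\mathbb{I}+pW$ and $p_*$ is the largest $p$ with $\widetilde W(p)\ge0$ (which equals the value given). A state is separable if it is a convex combination of product states; a completely positive map $\Lambda$ is entanglement breaking if $(\mathrm{id}_n\otimes\Lambda)\rho$ is separable for every state $\rho$ on $\mathbb{C}^n\otimes\mathbb{C}^n$, equivalently iff its normalized Choi matrix is separable. *)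

theory Defs
  imports "Jordan_Normal_Form.Matrix" "Jordan_Normal_Form.Char_Poly"
begin

text \<open>Matrix unit e_ij = |e_i><e_j| in M_n(C) (indices 0..n-1).\<close>
definition eunit :: "nat \<Rightarrow> nat \<Rightarrow> nat \<Rightarrow> complex mat" where
  "eunit n i j = mat n n (\<lambda>(a,b). if a = i \<and> b = j then 1 else 0)"

text \<open>Kronecker (tensor) product; basis e_a (x) e_b of C^p (x) C^q is index a*q+b.\<close>
definition kron :: "complex mat \<Rightarrow> complex mat \<Rightarrow> complex mat" where
  "kron A B = mat (dim_row A * dim_row B) (dim_col A * dim_col B)
     (\<lambda>(r,c). A $$ (r div dim_row B, c div dim_col B) * B $$ (r mod dim_row B, c mod dim_col B))"

definition R_basis :: "nat \<Rightarrow> (nat \<Rightarrow> nat \<Rightarrow> complex) \<Rightarrow> nat \<Rightarrow> nat \<Rightarrow> complex mat" where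
  "R_basis n z i j =
     (if i = j then (1 / (of_nat n - 1)) \<cdot>\<^sub>m (1\<^sub>m n - eunit n i i)
      else (- z i j / (of_nat n - 1)) \<cdot>\<^sub>m eunit n i j)"

definition R_map :: "nat \<Rightarrow> (nat \<Rightarrow> nat \<Rightarrow> complex) \<Rightarrow> complex mat \<Rightarrow> complex mat" where
  "R_map n z A = mat n n (\<lambda>(a,b). \<Sum>i<n. \<Sum>j<n. A $$ (i,j) * R_basis n z i j $$ (a,b))"

definition W_mat :: "nat \<Rightarrow> (nat \<Rightarrow> nat \<Rightarrow> complex) \<Rightarrow> complex mat" where
  "W_mat n z = mat (n*n) (n*n)
     (\<lambda>(r,c). (1 / of_nat n) * (\<Sum>i<n. \<Sum>j<n. kron (eunit n i j) (R_map n z (eunit n i j)) $$ (r,c)))"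

definition W_tilde :: "nat \<Rightarrow> (nat \<Rightarrow> nat \<Rightarrow> complex) \<Rightarrow> real \<Rightarrow> complex mat" where
  "W_tilde n z p = (complex_of_real ((1 - p) / (real n)^2)) \<cdot>\<^sub>m kron (1\<^sub>m n) (1\<^sub>m n)
                   + (complex_of_real p) \<cdot>\<^sub>m W_mat n z"

definition psd :: "nat \<Rightarrow> complex mat \<Rightarrow> bool" where
  "psd d A \<longleftrightarrow> A \<in> carrier_mat d d \<and>
     (\<forall>v :: nat \<Rightarrow> complex.
        let q = (\<Sum>a<d. \<Sum>b<d. cnj (v a) * A $$ (a,b) * v b) in Im q = 0 \<and> Re q \<ge> 0)"

definition is_state :: "nat \<Rightarrow> complex mat \<Rightarrow> bool" where
  "is_state d \<rho> \<longleftrightarrow> psd d \<rho> \<and> (\<Sum>a<d. \<rho> $$ (a,a)) = 1"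

definition separable :: "nat \<Rightarrow> complex mat \<Rightarrow> bool" where
  "separable n \<rho> \<longleftrightarrow>
     (\<exists>(m::nat) (w::nat \<Rightarrow> real) (A::nat \<Rightarrow> complex mat) (B::nat \<Rightarrow> complex mat).
        (\<forall>k<m. w k \<ge> 0) \<and> (\<Sum>k<m. w k) = 1 \<and>
        (\<forall>k<m. is_state n (A k) \<and> is_state n (B k)) \<and>
        \<rho> = mat (n*n) (n*n) (\<lambda>(r,c). \<Sum>k<m. complex_of_real (w k) * kron (A k) (B k) $$ (r,c)))"

end

theory Submission
  imports Defs "Jordan_Normal_Form.Schur_Decomposition"
begin

definition herm :: "nat \<Rightarrow> complex mat \<Rightarrow> bool" where
  "herm n H \<longleftrightarrow> H \<in> carrier_mat n n \<and> (\<forall>a<n. \<forall>b<n. H$$(a,b) = cnj (H$$(b,a)))"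
lemma herm_D: "herm n K \<Longrightarrow> a<n \<Longrightarrow> b<n \<Longrightarrow> cnj (K$$(b,a)) = K$$(a,b)"
  unfolding herm_def by (metis complex_cnj_cnj)

definition trm :: "nat \<Rightarrow> complex mat \<Rightarrow> complex" where
  "trm n X = (\<Sum>i<n. X $$ (i,i))"

lemma trm_mult: "X \<in> carrier_mat n n \<Longrightarrow> Y \<in> carrier_mat n n \<Longrightarrow>
   trm n (X * Y) = (\<Sum>i<n. \<Sum>k<n. X$$(i,k) * Y$$(k,i))"
  unfolding trm_def by (intro sum.cong refl) (auto simp: scalar_prod_def lessThan_atLeast0)

lemma trm_comm: assumes "X \<in> carrier_mat n n" "Y \<in> carrier_mat n n"
  shows "trm n (X * Y) = trm n (Y * X)"
  unfolding trm_mult[OF assms] trm_mult[OF assms(2,1)]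
  by (subst sum.swap) (simp add: mult.commute)

lemma herm_nonzero_eig:
  assumes K: "herm n K" and nz: "a < n" "b < n" "K $$ (a,b) \<noteq> 0"
  shows "\<exists>e v. eigenvector K v e \<and> e \<noteq> 0"
proof (rule ccontr)
  assume "\<not> ?thesis"
  hence ev0: "\<And>e. eigenvalue K e \<Longrightarrow> e = 0" unfolding eigenvalue_def by blast
  have Kc: "K \<in> carrier_mat n n" using K unfolding herm_def by simp
  obtain es where cp: "char_poly K = (\<Prod> a \<leftarrow> es. [:- a, 1:])" and les: "length es = n"
    using char_poly_factorized[OF Kc] by blast
  have es0: "x = 0" if "x \<in> set es" for x
  proof -
    have "poly (char_poly K) x = 0" unfolding cp poly_prod_list
      using that by (auto simp: prod_list_zero_iff)
    thus ?thesis using ev0 eigenvalue_root_char_poly[OF Kc] by blast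
  qed
  obtain B P Q where sd: "schur_decomposition K es = (B,P,Q)" by (metis prod_cases3)
  from schur_decomposition[OF Kc cp sd]
  have sim: "similar_mat_wit K B P Q" and ut: "upper_triangular B" and dg: "diag_mat B = es" by auto
  have dK: "dim_row K = n" using Kc by simp
  from sim have Bc: "B \<in> carrier_mat n n" and Pc: "P \<in> carrier_mat n n" and Qc: "Q \<in> carrier_mat n n"
    and QP: "Q * P = 1\<^sub>m n" and KPBQ: "K = P * B * Q"
    unfolding similar_mat_wit_def Let_def dK by auto
  have Bd: "B $$ (i,i) = 0" if "i < n" for i
  proof -
    have "B $$ (i,i) = diag_mat B ! i" unfolding diag_mat_def using Bc that by simp
    also have "\<dots> \<in> set es" unfolding dg using les that by simp
    finally show ?thesis using es0 by blast
  qed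
  have trB: "trm n (B * B) = 0"
    unfolding trm_mult[OF Bc Bc]
  proof (intro sum.neutral ballI)
    fix i k assume "i \<in> {..<n}" "k \<in> {..<n}"
    thus "B $$ (i, k) * B $$ (k, i) = 0"
      using ut Bc Bd by (cases "k < i"; cases "i < k") (auto simp: upper_triangular_def)
  qed
  have QPX: "Q * (P * X) = X" if "X \<in> carrier_mat n n" for X
    using that Qc Pc QP by (metis assoc_mult_mat left_mult_one_mat)
  have "K * K = P * (B * (B * Q))"
    unfolding KPBQ using Bc Pc Qc by (simp add: assoc_mult_mat[of _ n n _ n _ n] QPX)
  hence "trm n (K * K) = trm n (P * (B * (B * Q)))" by simp
  also have "\<dots> = trm n ((B * (B * Q)) * P)" using Pc Bc Qc by (intro trm_comm) auto
  also have "\<dots> = trm n (B * B)" using Pc Bc Qc QP by (simp add: assoc_mult_mat[of _ n n _ n _ n])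
  finally have trK: "trm n (K * K) = 0" using trB by simp
  have "trm n (K * K) = (\<Sum>i<n. \<Sum>k<n. of_real ((cmod (K$$(i,k)))^2))"
    unfolding trm_mult[OF Kc Kc]
  proof (intro sum.cong refl)
    fix i k assume "i \<in> {..<n}" "k \<in> {..<n}"
    hence "K$$(k,i) = cnj (K$$(i,k))" using herm_D[OF K, of k i] by simp
    thus "K$$(i,k) * K$$(k,i) = of_real ((cmod (K$$(i,k)))^2)" using complex_norm_square[of "K$$(i,k)"] by simp
  qed
  hence "complex_of_real (\<Sum>i<n. \<Sum>k<n. (cmod (K$$(i,k)))^2) = 0" using trK
    by (simp only: of_real_sum)
  hence "(\<Sum>i<n. \<Sum>k<n. (cmod (K$$(i,k)))^2) = 0" by (simp only: of_real_eq_0_iff)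
  hence "(\<Sum>k<n. (cmod (K$$(a,k)))^2) = 0" using nz(1)
    by (subst (asm) sum_nonneg_eq_0_iff) (auto intro!: sum_nonneg)
  hence "(cmod (K$$(a,b)))^2 = 0" using nz(2)
    by (subst (asm) sum_nonneg_eq_0_iff) auto
  thus False using nz(3) by simp
qed

definition ipr :: "nat \<Rightarrow> (nat\<Rightarrow>complex) \<Rightarrow> (nat\<Rightarrow>complex) \<Rightarrow> complex" where
  "ipr n u v = (\<Sum>a<n. cnj (u a) * v a)"
definition mv :: "nat \<Rightarrow> complex mat \<Rightarrow> (nat\<Rightarrow>complex) \<Rightarrow> nat \<Rightarrow> complex" where
  "mv n H u a = (\<Sum>b<n. H $$ (a,b) * u b)"
definition eigp :: "nat \<Rightarrow> complex mat \<Rightarrow> real \<Rightarrow> (nat\<Rightarrow>complex) \<Rightarrow> bool" where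
  "eigp n H l u \<longleftrightarrow> (\<forall>a<n. mv n H u a = of_real l * u a)"
definition spinv :: "nat \<Rightarrow> complex mat \<Rightarrow> (real \<times> (nat \<Rightarrow> complex)) list \<Rightarrow> bool" where
  "spinv n H L \<longleftrightarrow> (\<forall>q<length L. eigp n H (fst (L!q)) (snd (L!q))) \<and>
     (\<forall>q<length L. \<forall>r<length L. ipr n (snd(L!q)) (snd(L!r)) = (if q = r then 1 else 0))"
definition resm :: "nat \<Rightarrow> complex mat \<Rightarrow> (real \<times> (nat \<Rightarrow> complex)) list \<Rightarrow> complex mat" where
  "resm n H L = mat n n (\<lambda>(a,b). H$$(a,b) - (\<Sum>q<length L. of_real (fst (L!q)) * snd (L!q) a * cnj (snd (L!q) b)))"

lemma herm_sym:
  assumes "herm n K"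
  shows "ipr n u (mv n K w) = ipr n (mv n K u) w"
proof -
  have h: "\<And>a b. a<n \<Longrightarrow> b<n \<Longrightarrow> cnj (K$$(b,a)) = K$$(a,b)" using assms unfolding herm_def by (metis complex_cnj_cnj)
  have "ipr n u (mv n K w) = (\<Sum>a<n. \<Sum>b<n. cnj (u a) * K$$(a,b) * w b)"
    unfolding ipr_def mv_def by (simp add: sum_distrib_left mult.assoc)
  also have "\<dots> = (\<Sum>b<n. \<Sum>a<n. cnj (u a) * K$$(a,b) * w b)" by (rule sum.swap)
  also have "\<dots> = (\<Sum>b<n. \<Sum>a<n. cnj (K$$(b,a) * u a) * w b)"
    by (intro sum.cong refl) (simp add: h)
  also have "\<dots> = ipr n (mv n K u) w"
    unfolding ipr_def mv_def by (simp add: sum_distrib_right)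
  finally show ?thesis .
qed

lemma mv_resm:
  assumes "a < n"
  shows "mv n H w a = mv n (resm n H L) w a
     + (\<Sum>r<length L. of_real (fst (L!r)) * snd (L!r) a * ipr n (snd (L!r)) w)"
proof -
  have "mv n (resm n H L) w a = (\<Sum>b<n. (H$$(a,b) - (\<Sum>q<length L. of_real (fst (L!q)) * snd (L!q) a * cnj (snd (L!q) b))) * w b)"
    unfolding mv_def resm_def using assms by (intro sum.cong refl) simp
  also have "\<dots> = mv n H w a - (\<Sum>b<n. \<Sum>q<length L. of_real (fst (L!q)) * snd (L!q) a * cnj (snd (L!q) b) * w b)"
    unfolding mv_def by (simp add: left_diff_distrib sum_subtractf sum_distrib_right)
  also have "(\<Sum>b<n. \<Sum>q<length L. of_real (fst (L!q)) * snd (L!q) a * cnj (snd (L!q) b) * w b)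
     = (\<Sum>q<length L. of_real (fst (L!q)) * snd (L!q) a * ipr n (snd (L!q)) w)"
    by (subst sum.swap) (simp add: ipr_def sum_distrib_left mult.assoc)
  finally show ?thesis by (simp add: algebra_simps)
qed

lemma resm_herm: assumes "herm n H" shows "herm n (resm n H L)"
  unfolding herm_def
proof (intro conjI allI impI)
  show "resm n H L \<in> carrier_mat n n" unfolding resm_def by simp
  fix a b assume ab: "a < n" "b < n"
  have "cnj (resm n H L $$ (b,a)) = cnj (H$$(b,a)) - (\<Sum>q<length L. of_real (fst (L!q)) * cnj (snd (L!q) b) * snd (L!q) a)"
    unfolding resm_def using ab by simp
  also have "\<dots> = resm n H L $$ (a,b)"
    unfolding resm_def using ab herm_D[OF assms ab] by (simp add: mult.commute mult.left_commute)
  finally show "resm n H L $$ (a,b) = cnj (resm n H L $$ (b,a))" by simp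
qed

lemma resm_L:
  assumes "spinv n H L" "q < length L" "a < n"
  shows "mv n (resm n H L) (snd (L!q)) a = 0"
proof -
  have s: "(\<Sum>r<length L. of_real (fst (L!r)) * snd (L!r) a * ipr n (snd (L!r)) (snd (L!q)))
     = of_real (fst (L!q)) * snd (L!q) a"
  proof -
    have "(\<Sum>r<length L. of_real (fst (L!r)) * snd (L!r) a * ipr n (snd (L!r)) (snd (L!q)))
       = (\<Sum>r<length L. if r = q then of_real (fst (L!r)) * snd (L!r) a else 0)"
      using assms(1,2) unfolding spinv_def by (intro sum.cong refl) auto
    also have "\<dots> = of_real (fst (L!q)) * snd (L!q) a" using assms(2) by simp
    finally show ?thesis .
  qed
  have "mv n H (snd (L!q)) a = of_real (fst (L!q)) * snd (L!q) a"
    using assms unfolding spinv_def eigp_def by auto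
  with mv_resm[OF assms(3), of H "snd (L!q)" L] s show ?thesis by simp
qed

lemma pow4_key:
  fixes i l j k :: nat
  assumes "i \<le> l" "j \<le> k" and eq: "(4::nat)^i + 4^l = 4^j + 4^k"
  shows "i = j \<and> l = k"
proof -
  have lk: "l = k"
  proof (rule ccontr)
    assume "l \<noteq> k"
    hence "l < k \<or> k < l" by auto
    thus False
    proof
      assume "l < k"
      have "(4::nat)^i + 4^l \<le> 2 * 4^l" using assms(1) by (simp add: power_increasing)
      also have "\<dots> < 4 * 4^l" by simp
      also have "\<dots> = 4^(Suc l)" by simp
      also have "\<dots> \<le> 4^k" using \<open>l<k\<close> by (intro power_increasing) auto
      also have "\<dots> \<le> 4^j + 4^k" by simp
      finally show False using eq by simp
    next
      assume "k < l"
      have "(4::nat)^j + 4^k \<le> 2 * 4^k" using assms(2) by (simp add: power_increasing)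
      also have "\<dots> < 4 * 4^k" by simp
      also have "\<dots> = 4^(Suc k)" by simp
      also have "\<dots> \<le> 4^l" using \<open>k<l\<close> by (intro power_increasing) auto
      also have "\<dots> \<le> 4^i + 4^l" by simp
      finally show False using eq by simp
    qed
  qed
  with eq have "(4::nat)^i = 4^j" by simp
  hence "i = j" by (simp add: power_inject_exp)
  with lk show ?thesis by simp
qed

lemma pow4_eq:
  fixes i l j k :: nat
  assumes eq: "(4::nat)^i + 4^l = 4^j + 4^k"
  shows "(i = j \<and> l = k) \<or> (i = k \<and> l = j)"
proof (cases "i \<le> l")
  case True
  show ?thesis
  proof (cases "j \<le> k")
    case True
    with pow4_key[OF \<open>i\<le>l\<close> True eq] show ?thesis by simp
  next
    case False
    have "4^i + 4^l = 4^k + (4::nat)^j" using eq by simp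
    with pow4_key[OF \<open>i\<le>l\<close> _ this] False show ?thesis by simp
  qed
next
  case False
  hence il: "l \<le> i" by simp
  show ?thesis
  proof (cases "j \<le> k")
    case True
    have "(4::nat)^l + 4^i = 4^j + 4^k" using eq by simp
    with pow4_key[OF il True this] show ?thesis by simp
  next
    case False
    have "(4::nat)^l + 4^i = 4^k + 4^j" using eq by simp
    with pow4_key[OF il _ this] False show ?thesis by simp
  qed
qed

lemma cis_sum_root:
  fixes e :: int and N :: nat
  assumes N: "N > 0" and e: "\<bar>e\<bar> < int N"
  shows "(\<Sum>t<N. cis (2 * pi * real t * real_of_int e / real N)) = (if e = 0 then of_nat N else 0)"
proof (cases "e = 0")
  case True thus ?thesis by simp
next
  case False
  define z where "z = cis (2 * pi * real_of_int e / real N)"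
  have zt: "cis (2 * pi * real t * real_of_int e / real N) = z ^ t" for t
    unfolding z_def DeMoivre by (simp add: field_simps)
  have z1: "z \<noteq> 1"
  proof
    assume "z = 1"
    hence "cos (2 * pi * real_of_int e / real N) = 1" unfolding z_def
      by (metis complex.sel(1) cis.sel(1) one_complex.sel(1))
    then obtain k :: int where k: "2 * pi * real_of_int e / real N = real_of_int k * 2 * pi"
      unfolding cos_one_2pi_int by blast
    hence "real_of_int e = real_of_int k * real N" using N by (simp add: field_simps)
    hence ek: "e = k * int N" by (metis of_int_eq_iff of_int_mult of_int_of_nat_eq)
    have "k \<noteq> 0" using False ek by auto
    hence "\<bar>e\<bar> \<ge> int N" unfolding ek abs_mult
      by (simp add: mult_le_cancel_right1 abs_ge_zero) (smt (verit))
    with e show False by simp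
  qed
  have zN: "z ^ N = 1"
  proof -
    have "real N * (2 * pi * real_of_int e / real N) = 2 * pi * real_of_int e" using N by simp
    thus ?thesis unfolding z_def DeMoivre by (simp add: cis_multiple_2pi)
  qed
  have "(\<Sum>t<N. cis (2 * pi * real t * real_of_int e / real N)) = (\<Sum>t<N. z ^ t)"
    by (simp add: zt)
  also have "\<dots> = 0" using z1 zN by (simp add: sum_gp_strict)
  finally show ?thesis using False by simp
qed

lemma ipr_cong: "(\<And>a. a < n \<Longrightarrow> f a = g a) \<Longrightarrow> (\<And>a. a < n \<Longrightarrow> h a = k a) \<Longrightarrow> ipr n f h = ipr n g k"
  unfolding ipr_def by (intro sum.cong) auto

lemma ipr_scale_r: "ipr n u (\<lambda>a. c * w a) = c * ipr n u w"
  unfolding ipr_def by (simp add: sum_distrib_left mult.left_commute)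

lemma ipr_scale_l: "ipr n (\<lambda>a. c * u a) w = cnj c * ipr n u w"
  unfolding ipr_def by (simp add: sum_distrib_left mult.assoc)

lemma ipr_cnj: "cnj (ipr n u w) = ipr n w u"
  unfolding ipr_def by (simp add: mult.commute)

lemma ipr_self: "ipr n u u = of_real (\<Sum>a<n. (cmod (u a))^2)"
  unfolding ipr_def of_real_sum
  by (intro sum.cong refl) (metis complex_norm_square mult.commute of_real_power)

lemma mv_scale: "mv n H (\<lambda>a. c * w a) a = c * mv n H w a"
  unfolding mv_def by (simp add: sum_distrib_left mult.left_commute)

lemma ipr_sum_l: "ipr n (\<lambda>a. \<Sum>q\<in>S. c q * u q a) w = (\<Sum>q\<in>S. cnj (c q) * ipr n (u q) w)"
  unfolding ipr_def by (simp add: sum_distrib_left sum_distrib_right cnj_sum mult.assoc sum.swap[of _ S])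

lemma ipr_sum_r: "ipr n w (\<lambda>a. \<Sum>q\<in>S. c q * u q a) = (\<Sum>q\<in>S. c q * ipr n w (u q))"
  unfolding ipr_def by (simp add: sum_distrib_left mult.left_commute sum.swap[of _ S])

lemma ipr_diff_l: "ipr n (\<lambda>a. f a - g a) w = ipr n f w - ipr n g w"
  unfolding ipr_def by (simp add: left_diff_distrib sum_subtractf)

lemma ipr_diff_r: "ipr n w (\<lambda>a. f a - g a) = ipr n w f - ipr n w g"
  unfolding ipr_def by (simp add: right_diff_distrib sum_subtractf)

lemma ipr_delta_l: "i < n \<Longrightarrow> ipr n (\<lambda>a. if a = i then 1 else 0) w = w i"
  unfolding ipr_def by (subst sum.cong[OF refl, of _ _ "\<lambda>a. if a = i then w a else 0"]) auto

lemma ipr_delta_r: "i < n \<Longrightarrow> ipr n w (\<lambda>a. if a = i then 1 else 0) = cnj (w i)"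
  unfolding ipr_def by (subst sum.cong[OF refl, of _ _ "\<lambda>a. if a = i then cnj (w a) else 0"]) auto


lemma bessel:
  assumes I: "spinv n H L" and i: "i < n"
  shows "(\<Sum>q<length L. (cmod (snd (L!q) i))^2) \<le> 1"
proof -
  define u where "u = (\<lambda>q. snd (L!q))"
  define s where "s = (\<Sum>q<length L. (cmod (u q i))^2)"
  define y where "y = (\<lambda>a. \<Sum>q<length L. cnj (u q i) * u q a)"
  define d where "d = (\<lambda>a. (if a = i then 1 else 0) - y a)"
  have orth: "\<And>q r. q < length L \<Longrightarrow> r < length L \<Longrightarrow> ipr n (u q) (u r) = (if q = r then 1 else 0)"
    using I unfolding spinv_def u_def by auto
  have yi: "y i = of_real s" unfolding y_def s_def of_real_sum
    by (intro sum.cong refl) (metis complex_norm_square mult.commute of_real_power)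
  have uy: "ipr n (u q) y = cnj (u q i)" if q: "q < length L" for q
  proof -
    have "ipr n (u q) y = (\<Sum>r<length L. cnj (u r i) * ipr n (u q) (u r))"
      unfolding y_def by (rule ipr_sum_r)
    also have "\<dots> = (\<Sum>r<length L. if r = q then cnj (u r i) else 0)"
      using q orth by (intro sum.cong refl) auto
    also have "\<dots> = cnj (u q i)" using q by simp
    finally show ?thesis .
  qed
  have yy: "ipr n y y = of_real s"
  proof -
    have "ipr n y y = (\<Sum>q<length L. cnj (cnj (u q i)) * ipr n (u q) y)"
      unfolding y_def by (rule ipr_sum_l)
    also have "\<dots> = (\<Sum>q<length L. cnj (u q i) * u q i)"
      using uy by (intro sum.cong refl) (simp add: mult.commute)
    also have "\<dots> = y i" unfolding y_def ..
    finally show ?thesis using yi by simp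
  qed
  have "ipr n d d = ipr n (\<lambda>a. if a = i then 1 else 0) d - ipr n y d"
    unfolding d_def by (rule ipr_diff_l)
  also have "\<dots> = (1 - y i) - (cnj (y i) - ipr n y y)"
    unfolding d_def ipr_diff_r ipr_delta_l[OF i] ipr_delta_r[OF i] by simp
  finally have "ipr n d d = of_real (1 - s)" using yi yy by simp
  moreover have "ipr n d d = of_real (\<Sum>a<n. (cmod (d a))^2)" by (rule ipr_self)
  ultimately have "1 - s = (\<Sum>a<n. (cmod (d a))^2)" by (metis of_real_eq_iff)
  moreover have "(\<Sum>a<n. (cmod (d a))^2) \<ge> 0" by (intro sum_nonneg) auto
  ultimately show ?thesis unfolding s_def u_def by simp
qed

lemma spinv_length:
  assumes I: "spinv n H L"
  shows "length L \<le> n"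
proof -
  have "real (length L) = (\<Sum>q<length L. 1)" by simp
  also have "\<dots> = (\<Sum>q<length L. \<Sum>a<n. (cmod (snd (L!q) a))^2)"
  proof (intro sum.cong refl)
    fix q assume "q \<in> {..<length L}"
    hence "ipr n (snd (L!q)) (snd (L!q)) = 1" using I unfolding spinv_def by auto
    thus "1 = (\<Sum>a<n. (cmod (snd (L!q) a))^2)" unfolding ipr_self by (metis of_real_eq_1_iff)
  qed
  also have "\<dots> = (\<Sum>a<n. \<Sum>q<length L. (cmod (snd (L!q) a))^2)" by (rule sum.swap)
  also have "\<dots> \<le> (\<Sum>a<n. 1)" by (intro sum_mono bessel[OF I]) auto
  finally show ?thesis by simp
qed


lemma spinv_step:
  assumes H: "herm n H" and I: "spinv n H L"
    and nz: "a < n" "b < n" "resm n H L $$ (a,b) \<noteq> 0"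
  shows "\<exists>e w. spinv n H (L @ [(e,w)])"
proof -
  define K where "K = resm n H L"
  have K: "herm n K" unfolding K_def by (rule resm_herm[OF H])
  have Kc: "K \<in> carrier_mat n n" using K unfolding herm_def by simp
  obtain e v where ev: "eigenvector K v e" and e0: "e \<noteq> 0"
    using herm_nonzero_eig[OF K nz(1,2)] nz(3) unfolding K_def by blast
  have v: "v \<in> carrier_vec n" and v0: "v \<noteq> 0\<^sub>v n" and Kv: "K *\<^sub>v v = e \<cdot>\<^sub>v v"
    using ev Kc unfolding eigenvector_def by auto
  define w0 where "w0 = (\<lambda>a. v $ a)"
  have Kw0: "mv n K w0 a = e * w0 a" if "a < n" for a
  proof -
    have "(K *\<^sub>v v) $ a = e * v $ a" using Kv that v by simp
    moreover have "(K *\<^sub>v v) $ a = mv n K w0 a"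
      using that v Kc unfolding mv_def w0_def
      by (simp add: scalar_prod_def lessThan_atLeast0 row_def)
    ultimately show ?thesis unfolding w0_def by simp
  qed
  define sr where "sr = (\<Sum>a<n. (cmod (w0 a))^2)"
  have ww: "ipr n w0 w0 = of_real sr" unfolding sr_def by (rule ipr_self)
  have sr_pos: "sr > 0"
  proof -
    obtain a0 where a0: "a0 < n" "v $ a0 \<noteq> 0" using v v0 by (metis vec_eq_iff carrier_vecD index_zero_vec(1,2))
    have "(cmod (w0 a0))^2 > 0" using a0 unfolding w0_def by simp
    moreover have "(cmod (w0 a0))^2 \<le> sr" unfolding sr_def
      using a0 by (intro member_le_sum) auto
    ultimately show ?thesis by linarith
  qed
  have eK: "ipr n w0 (mv n K w0) = e * of_real sr"
  proof -
    have "ipr n w0 (mv n K w0) = ipr n w0 (\<lambda>a. e * w0 a)" by (intro ipr_cong Kw0) auto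
    thus ?thesis using ww by (simp add: ipr_scale_r)
  qed
  have "ipr n (mv n K w0) w0 = cnj e * of_real sr"
  proof -
    have "ipr n (mv n K w0) w0 = ipr n (\<lambda>a. e * w0 a) w0" by (intro ipr_cong Kw0) auto
    thus ?thesis using ww by (simp add: ipr_scale_l)
  qed
  with eK herm_sym[OF K, of w0 w0] have "e * of_real sr = cnj e * of_real sr" by metis
  with sr_pos have ecnj: "cnj e = e" by simp
  define er where "er = Re e"
  have "Im e = 0" using arg_cong[OF ecnj, of Im] by simp
  hence e_er: "e = of_real er" unfolding er_def by (simp add: complex_eq_iff)
  have orth: "ipr n (snd (L!q)) w0 = 0" if q: "q < length L" for q
  proof -
    have "e * ipr n (snd (L!q)) w0 = ipr n (snd (L!q)) (\<lambda>a. e * w0 a)" by (simp add: ipr_scale_r)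
    also have "\<dots> = ipr n (snd (L!q)) (mv n K w0)" by (intro ipr_cong) (auto simp: Kw0)
    also have "\<dots> = ipr n (mv n K (snd (L!q))) w0" by (rule herm_sym[OF K])
    also have "\<dots> = ipr n (\<lambda>a. 0) w0" unfolding K_def by (intro ipr_cong resm_L[OF I q]) auto
    also have "\<dots> = 0" unfolding ipr_def by simp
    finally show ?thesis using e0 by simp
  qed
  have Hw0: "mv n H w0 a = of_real er * w0 a" if a: "a < n" for a
  proof -
    have "mv n H w0 a = mv n K w0 a + (\<Sum>r<length L. of_real (fst (L!r)) * snd (L!r) a * ipr n (snd (L!r)) w0)"
      unfolding K_def by (rule mv_resm[OF a])
    also have "(\<Sum>r<length L. of_real (fst (L!r)) * snd (L!r) a * ipr n (snd (L!r)) w0) = 0"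
      using orth by (intro sum.neutral) auto
    finally show ?thesis using Kw0[OF a] e_er by simp
  qed
  define c where "c = 1 / sqrt sr"
  define w where "w = (\<lambda>a. of_real c * w0 a)"
  have "spinv n H (L @ [(er,w)])"
    unfolding spinv_def
  proof (intro conjI allI impI)
    fix q assume q: "q < length (L @ [(er,w)])"
    show "eigp n H (fst ((L @ [(er, w)]) ! q)) (snd ((L @ [(er, w)]) ! q))"
    proof (cases "q < length L")
      case True thus ?thesis using I unfolding spinv_def by (simp add: nth_append)
    next
      case False
      with q have "q = length L" by simp
      thus ?thesis unfolding eigp_def w_def using Hw0 by (simp add: mv_scale)
    qed
  next
    have ww1: "ipr n w w = 1"
    proof -
      have "ipr n w w = cnj (of_real c) * (of_real c * of_real sr)"
        unfolding w_def ipr_scale_l ipr_scale_r ww ..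
      also have "\<dots> = of_real (c * c * sr)" by simp
      also have "c * c * sr = 1" unfolding c_def using sr_pos
        by (simp add: field_simps)
      finally show ?thesis by simp
    qed
    have wo: "ipr n (snd (L!q)) w = 0" if "q < length L" for q
      unfolding w_def ipr_scale_r using orth[OF that] by simp
    have ow: "ipr n w (snd (L!q)) = 0" if "q < length L" for q
      using wo[OF that] by (metis ipr_cnj complex_cnj_zero)
    fix q r assume q: "q < length (L @ [(er,w)])" and r: "r < length (L @ [(er,w)])"
    show "ipr n (snd ((L @ [(er, w)]) ! q)) (snd ((L @ [(er, w)]) ! r)) = (if q = r then 1 else 0)"
    proof (cases "q < length L"; cases "r < length L")
      assume "q < length L" "r < length L"
      thus ?thesis using I unfolding spinv_def by (simp add: nth_append)
    next
      assume "q < length L" "\<not> r < length L"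
      with r have "r = length L" by simp
      thus ?thesis using wo \<open>q < length L\<close> by (simp add: nth_append)
    next
      assume "\<not> q < length L" "r < length L"
      with q have "q = length L" by simp
      thus ?thesis using ow \<open>r < length L\<close> by (simp add: nth_append)
    next
      assume "\<not> q < length L" "\<not> r < length L"
      with q r have "q = length L" "r = length L" by auto
      thus ?thesis using ww1 by (simp add: nth_append)
    qed
  qed
  thus ?thesis by blast
qed


lemma spectral:
  assumes H: "herm n H"
  shows "\<exists>L. spinv n H L \<and> (\<forall>a<n. \<forall>b<n. H$$(a,b) = (\<Sum>q<length L. of_real (fst (L!q)) * snd (L!q) a * cnj (snd (L!q) b)))"
proof (rule ccontr)
  assume na: "\<not> ?thesis"
  have ex: "\<exists>L. spinv n H L \<and> length L = k" for k
  proof (induction k)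
    case 0 show ?case by (intro exI[of _ "[]"]) (simp add: spinv_def)
  next
    case (Suc k)
    then obtain L where L: "spinv n H L" "length L = k" by blast
    with na obtain a b where ab: "a < n" "b < n"
      "H$$(a,b) \<noteq> (\<Sum>q<length L. of_real (fst (L!q)) * snd (L!q) a * cnj (snd (L!q) b))" by blast
    have "resm n H L $$ (a,b) \<noteq> 0" using ab unfolding resm_def by simp
    from spinv_step[OF H L(1) ab(1,2) this] obtain e w where "spinv n H (L @ [(e,w)])" by blast
    thus ?case using L(2) by (intro exI[of _ "L @ [(e,w)]"]) simp
  qed
  from ex[of "Suc n"] spinv_length show False by fastforce
qed

lemma idx_lt: "a < n \<Longrightarrow> b < n \<Longrightarrow> a * n + b < n * (n::nat)"
proof -
  assume "a < n" "b < n"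
  hence "a * n + b < a * n + n" by simp
  also have "\<dots> = (a + 1) * n" by simp
  also have "\<dots> \<le> n * n" using \<open>a < n\<close> by (intro mult_right_mono) auto
  finally show ?thesis .
qed

lemma idx_div: "b < n \<Longrightarrow> (a * n + b) div n = (a::nat)" by simp
lemma idx_mod: "b < n \<Longrightarrow> (a * n + b) mod n = (b::nat)" by simp

lemma kron_idx:
  assumes "A \<in> carrier_mat n n" "B \<in> carrier_mat n n" "a < n" "b < n" "a' < n" "b' < n"
  shows "kron A B $$ (a*n+b, a'*n+b') = A$$(a,a') * B$$(b,b')"
  using assms idx_lt[of a n b] idx_lt[of a' n b'] unfolding kron_def by simp

lemma if01_mult: "(if P then 1 else 0) * x = (if P then x else (0::'a::semiring_1))" by simp

lemma sum_if_conj: "a < (n::nat) \<Longrightarrow> a' < n \<Longrightarrow> (\<Sum>i<n. \<Sum>j<n. if i = a \<and> j = a' then f i j else 0) = (f a a' :: 'a::comm_monoid_add)"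
proof -
  assume a: "a < n" "a' < n"
  have "(\<Sum>i<n. \<Sum>j<n. if i = a \<and> j = a' then f i j else 0) = (\<Sum>i<n. if i = a then f i a' else 0)"
    using a by (intro sum.cong refl) (auto simp: sum.delta)
  thus ?thesis using a by simp
qed

lemma eunit_idx: "i < n \<Longrightarrow> j < n \<Longrightarrow> eunit n a b $$ (i,j) = (if i = a \<and> j = b then 1 else 0)"
  unfolding eunit_def by simp

lemma R_map_carrier: "R_map n z X \<in> carrier_mat n n" unfolding R_map_def by simp
lemma eunit_carrier: "eunit n i j \<in> carrier_mat n n" unfolding eunit_def by simp

lemma R_map_eunit:
  assumes "a < n" "a' < n" "b < n" "b' < n"
  shows "R_map n z (eunit n a a') $$ (b,b') = R_basis n z a a' $$ (b,b')"
proof -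
  have "R_map n z (eunit n a a') $$ (b,b') = (\<Sum>i<n. \<Sum>j<n. if i = a \<and> j = a' then R_basis n z i j $$ (b,b') else 0)"
    unfolding R_map_def using assms by (simp add: eunit_idx if01_mult)
  also have "\<dots> = R_basis n z a a' $$ (b,b')" using assms(1,2) by (rule sum_if_conj)
  finally show ?thesis .
qed

lemma R_basis_idx:
  assumes "b < n" "b' < n"
  shows "R_basis n z a a' $$ (b,b') = (if a = a' then (1 / (of_nat n - 1)) * ((if b = b' then 1 else 0) - (if b = a \<and> b' = a then 1 else 0))
       else (- z a a' / (of_nat n - 1)) * (if b = a \<and> b' = a' then 1 else 0))"
  unfolding R_basis_def eunit_def using assms by auto

lemma W_idx:
  assumes "a < n" "a' < n" "b < n" "b' < n"
  shows "W_mat n z $$ (a*n+b, a'*n+b') = (1 / of_nat n) * R_basis n z a a' $$ (b,b')"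
proof -
  have "W_mat n z $$ (a*n+b, a'*n+b') = (1 / of_nat n) * (\<Sum>i<n. \<Sum>j<n. kron (eunit n i j) (R_map n z (eunit n i j)) $$ (a*n+b, a'*n+b'))"
    unfolding W_mat_def using assms idx_lt[of a n b] idx_lt[of a' n b'] by simp
  also have "(\<Sum>i<n. \<Sum>j<n. kron (eunit n i j) (R_map n z (eunit n i j)) $$ (a*n+b, a'*n+b'))
     = (\<Sum>i<n. \<Sum>j<n. if i = a \<and> j = a' then R_map n z (eunit n i j) $$ (b,b') else 0)"
    using assms by (intro sum.cong refl) (auto simp: kron_idx[where n=n] eunit_idx R_map_carrier eunit_carrier)
  also have "\<dots> = R_map n z (eunit n a a') $$ (b,b')" using assms(1,2) by (rule sum_if_conj)
  also have "\<dots> = R_basis n z a a' $$ (b,b')" using assms by (simp add: R_map_eunit)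
  finally show ?thesis .
qed


lemma Wt_idx:
  assumes n2: "n \<ge> 2" and ab: "a < n" "a' < n" "b < n" "b' < n"
  shows "W_tilde n z p $$ (a*n+b, a'*n+b') =
     of_real ((1-p)/(real n)^2) * (if a = a' \<and> b = b' then 1 else 0)
     + of_real (p / (real n * (real n - 1))) * (if a = a' then (if b = b' \<and> b \<noteq> a then 1 else 0)
          else (if b = a \<and> b' = a' then - z a a' else 0))"
proof -
  have I: "kron (1\<^sub>m n) (1\<^sub>m n) $$ (a*n+b, a'*n+b') = (if a = a' \<and> b = b' then 1 else 0)"
    using ab by (simp add: kron_idx[where n=n])
  have dims: "dim_row (kron (1\<^sub>m n) (1\<^sub>m n)) = n*n" "dim_col (kron (1\<^sub>m n) (1\<^sub>m n)) = n*n"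
    "dim_row (W_mat n z) = n*n" "dim_col (W_mat n z) = n*n"
    unfolding kron_def W_mat_def by auto
  have lt: "a*n+b < n*n" "a'*n+b' < n*n" using ab idx_lt by auto
  have "W_tilde n z p $$ (a*n+b, a'*n+b') = of_real ((1-p)/(real n)^2) * kron (1\<^sub>m n) (1\<^sub>m n) $$ (a*n+b, a'*n+b')
      + of_real p * W_mat n z $$ (a*n+b, a'*n+b')"
    unfolding W_tilde_def using dims lt by simp
  also have "W_mat n z $$ (a*n+b, a'*n+b') = (1 / of_nat n) * R_basis n z a a' $$ (b,b')"
    using ab by (rule W_idx)
  also have "R_basis n z a a' $$ (b,b') = (if a = a' then (1 / (of_nat n - 1)) * ((if b = b' then 1 else 0) - (if b = a \<and> b' = a then 1 else 0))
       else (- z a a' / (of_nat n - 1)) * (if b = a \<and> b' = a' then 1 else 0))"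
    using ab by (intro R_basis_idx)
  finally have e: "W_tilde n z p $$ (a*n+b, a'*n+b') = of_real ((1-p)/(real n)^2) * (if a = a' \<and> b = b' then 1 else 0)
      + of_real p * ((1 / of_nat n) * (if a = a' then (1 / (of_nat n - 1)) * ((if b = b' then 1 else 0) - (if b = a \<and> b' = a then 1 else 0))
       else (- z a a' / (of_nat n - 1)) * (if b = a \<and> b' = a' then 1 else 0)))"
    unfolding I .
  have nn: "(of_nat n :: complex) - 1 = of_real (real n - 1)" by simp
  have nz: "real n - 1 \<noteq> 0" "real n \<noteq> 0" using n2 by auto
  show ?thesis unfolding e nn using nz
    by (cases "a = a'"; cases "b = b'"; cases "b = a"; cases "b' = a'") (auto simp: field_simps)
qed

lemma sum_block: "sum f {a*n..<a*n+n} = (\<Sum>b<(n::nat). f (a*n+b))"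
proof -
  have "{a*n..<a*n+n} = (\<lambda>b. a*n+b) ` {..<n}"
    by (simp add: image_add_atLeastLessThan lessThan_atLeast0 add.commute)
  thus ?thesis by (simp add: sum.reindex inj_on_def)
qed

lemma sum_nn: "(\<Sum>r<n*n. f r) = (\<Sum>a<n. \<Sum>b<(n::nat). f (a*n+b))"
proof -
  have "(\<Sum>r<n*n. f r) = (\<Sum>a<n. sum f {a*n..<a*n+n})" by (rule sum.nat_group[symmetric])
  also have "\<dots> = (\<Sum>a<n. \<Sum>b<n. f (a*n+b))" by (simp add: sum_block)
  finally show ?thesis .
qed


lemma mult_if0: "c * (if P then x else 0) = (if P then c * x else (0::'a::mult_zero))" by simp

definition Zm :: "nat \<Rightarrow> (nat \<Rightarrow> nat \<Rightarrow> complex) \<Rightarrow> nat \<Rightarrow> nat \<Rightarrow> complex" where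
  "Zm n z i j = (if i = j then 0 else z i j)"

definition Hm :: "nat \<Rightarrow> (nat \<Rightarrow> nat \<Rightarrow> complex) \<Rightarrow> real \<Rightarrow> real \<Rightarrow> complex mat" where
  "Hm n z d c = mat n n (\<lambda>(i,j). of_real d * (if i = j then 1 else 0) - of_real c * Zm n z i j)"

lemma W_diag_vec:
  assumes n2: "n \<ge> 2" and ab: "a < n" "b < n"
  shows "(\<Sum>r'<n*n. W_mat n z $$ (a*n+b, r') * (if r' div n = r' mod n then u (r' div n) else 0))
      = (if b = a then - (1 / (of_nat n * (of_nat n - 1))) * (\<Sum>a'<n. Zm n z a a' * u a') else 0)"
proof -
  have "(\<Sum>r'<n*n. W_mat n z $$ (a*n+b, r') * (if r' div n = r' mod n then u (r' div n) else 0))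
     = (\<Sum>a'<n. \<Sum>b'<n. W_mat n z $$ (a*n+b, a'*n+b') * (if a' = b' then u a' else 0))"
    by (subst sum_nn) (intro sum.cong refl, simp)
  also have "\<dots> = (\<Sum>a'<n. W_mat n z $$ (a*n+b, a'*n+a') * u a')"
    by (intro sum.cong refl) (simp add: if_distrib[of "\<lambda>x. _ * x"] sum.delta cong: if_cong)
  also have "\<dots> = (\<Sum>a'<n. (if b = a then - (1 / (of_nat n * (of_nat n - 1))) * Zm n z a a' else 0) * u a')"
  proof (intro sum.cong refl)
    fix a' assume a': "a' \<in> {..<n}"
    have "W_mat n z $$ (a*n+b, a'*n+a') = (1 / of_nat n) * R_basis n z a a' $$ (b,a')"
      using ab a' by (intro W_idx) auto
    also have "\<dots> = (if b = a then - (1 / (of_nat n * (of_nat n - 1))) * Zm n z a a' else 0)"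
      using ab a' by (auto simp: R_basis_idx Zm_def)
    finally show "W_mat n z $$ (a*n+b, a'*n+a') * u a' = (if b = a then - (1 / (of_nat n * (of_nat n - 1))) * Zm n z a a' else 0) * u a'"
      by simp
  qed
  also have "\<dots> = (if b = a then - (1 / (of_nat n * (of_nat n - 1))) * (\<Sum>a'<n. Zm n z a a' * u a') else 0)"
    by (auto simp: sum_distrib_left mult.assoc)
  finally show ?thesis .
qed


lemma eig_transfer:
  assumes n2: "n \<ge> 2"
    and lam_min: "\<And>\<mu>. eigenvalue (W_mat n z) \<mu> \<Longrightarrow> lam \<le> Re \<mu>"
    and lam_neg: "lam < 0"
    and p_def: "p = 1 / (1 + (real n)^2 * \<bar>lam\<bar>)"
    and ev: "eigp n (Hm n z ((1-p)/(real n)^2) (p / (real n * (real n - 1)))) l u"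
    and u0: "a0 < n" "u a0 \<noteq> 0"
  shows "l \<ge> 0"
proof -
  define d where "d = (1-p)/(real n)^2"
  define c where "c = p / (real n * (real n - 1))"
  have ppos: "p > 0" unfolding p_def by (simp add: add_pos_nonneg)
  have nr: "real n - 1 > 0" "real n > 0" using n2 by auto
  have den: "1 + (real n)^2 * \<bar>lam\<bar> > 0" by (simp add: add_pos_nonneg)
  have p1: "1 - p = (real n)^2 * \<bar>lam\<bar> * p" unfolding p_def using den by (simp add: field_simps)
  have dp: "d = p * \<bar>lam\<bar>" unfolding d_def p1 using nr by simp
  have cp: "c * (real n * (real n - 1)) = p" unfolding c_def using nr by simp
  have Zu: "(\<Sum>a'<n. Zm n z a a' * u a') = of_real ((d - l) / c) * u a" if a: "a < n" for a
  proof -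
    have "of_real l * u a = mv n (Hm n z d c) u a" using ev a unfolding eigp_def d_def c_def by simp
    also have "\<dots> = (\<Sum>b<n. (of_real d * (if a = b then 1 else 0) - of_real c * Zm n z a b) * u b)"
      unfolding mv_def Hm_def using a by (intro sum.cong refl) auto
    also have "\<dots> = of_real d * u a - of_real c * (\<Sum>b<n. Zm n z a b * u b)"
      using a by (simp add: left_diff_distrib sum_subtractf sum_distrib_left mult.assoc if_distrib[of "\<lambda>x. x * _"] mult_if0 cong: if_cong)
    finally have "of_real c * (\<Sum>b<n. Zm n z a b * u b) = of_real (d - l) * u a" by (simp add: algebra_simps)
    moreover have "c > 0" unfolding c_def using ppos nr by simp
    ultimately show ?thesis by (simp add: field_simps)
  qed
  define v where "v = vec (n*n) (\<lambda>r. if r div n = r mod n then u (r div n) else 0)"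
  define \<mu> where "\<mu> = (of_real ((l - d) / p) :: complex)"
  have Wc: "W_mat n z \<in> carrier_mat (n*n) (n*n)" unfolding W_mat_def by simp
  have "eigenvector (W_mat n z) v \<mu>"
    unfolding eigenvector_def
  proof (intro conjI)
    show "v \<in> carrier_vec (dim_row (W_mat n z))" using Wc unfolding v_def by simp
    have lt: "a0*n+a0 < n*n" using u0 idx_lt by auto
    have "v $ (a0*n+a0) = u a0" unfolding v_def using lt u0 by simp
    thus "v \<noteq> 0\<^sub>v (dim_row (W_mat n z))" using u0 lt Wc by auto
    show "W_mat n z *\<^sub>v v = \<mu> \<cdot>\<^sub>v v"
    proof (rule eq_vecI)
      show "dim_vec (W_mat n z *\<^sub>v v) = dim_vec (\<mu> \<cdot>\<^sub>v v)" using Wc unfolding v_def by simp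
      fix r assume "r < dim_vec (\<mu> \<cdot>\<^sub>v v)"
      hence r: "r < n*n" unfolding v_def by simp
      define a b where "a = r div n" and "b = r mod n"
      have ab: "a < n" "b < n" "r = a*n+b" unfolding a_def b_def using r n2 div_mult_mod_eq[of r n]
        by (auto simp: less_mult_imp_div_less)
      have "(W_mat n z *\<^sub>v v) $ r = (\<Sum>r'<n*n. W_mat n z $$ (a*n+b, r') * (if r' div n = r' mod n then u (r' div n) else 0))"
        using r Wc ab unfolding v_def by (simp add: scalar_prod_def lessThan_atLeast0 row_def)
      also have "\<dots> = (if b = a then - (1 / (of_nat n * (of_nat n - 1))) * (\<Sum>a'<n. Zm n z a a' * u a') else 0)"
        using n2 ab by (intro W_diag_vec) auto
      also have "\<dots> = (if b = a then \<mu> * u a else 0)"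
      proof (cases "b = a")
        case True
        have "- (1 / (of_nat n * (of_nat n - 1))) * (\<Sum>a'<n. Zm n z a a' * u a')
            = of_real (- (1 / (real n * (real n - 1))) * ((d - l) / c)) * u a"
          unfolding Zu[OF ab(1)] by simp
        also have "- (1 / (real n * (real n - 1))) * ((d - l) / c) = (l - d) / p"
          unfolding c_def using nr ppos by (simp add: field_simps)
        finally show ?thesis using True unfolding \<mu>_def by simp
      qed simp
      also have "\<dots> = (\<mu> \<cdot>\<^sub>v v) $ r" unfolding v_def using r ab by auto
      finally show "(W_mat n z *\<^sub>v v) $ r = (\<mu> \<cdot>\<^sub>v v) $ r" .
    qed
  qed
  hence "lam \<le> Re \<mu>" using lam_min unfolding eigenvalue_def by blast
  hence "lam \<le> (l - d) / p" unfolding \<mu>_def by simp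
  hence "lam * p \<le> l - d" using ppos by (simp add: field_simps)
  thus ?thesis unfolding dp using lam_neg ppos by (simp add: algebra_simps abs_if)
qed

lemma rank1_state:
  assumes x: "(\<Sum>a<n. (cmod (x a))^2) = 1"
  shows "is_state n (mat n n (\<lambda>(a,b). x a * cnj (x b)))"
  unfolding is_state_def psd_def
proof (intro conjI allI)
  show "mat n n (\<lambda>(a,b). x a * cnj (x b)) \<in> carrier_mat n n" by simp
  fix v :: "nat \<Rightarrow> complex"
  define \<alpha> where "\<alpha> = (\<Sum>a<n. cnj (v a) * x a)"
  have "(\<Sum>a<n. \<Sum>b<n. cnj (v a) * mat n n (\<lambda>(a,b). x a * cnj (x b)) $$ (a,b) * v b)
      = (\<Sum>a<n. \<Sum>b<n. (cnj (v a) * x a) * (cnj (x b) * v b))"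
    by (intro sum.cong refl) (simp add: mult.assoc mult.left_commute)
  also have "\<dots> = \<alpha> * cnj \<alpha>" unfolding \<alpha>_def cnj_sum sum_product
    by (intro sum.cong refl) (simp add: mult.commute)
  also have "\<dots> = of_real ((cmod \<alpha>)^2)" by (metis complex_norm_square)
  finally have q: "(\<Sum>a<n. \<Sum>b<n. cnj (v a) * mat n n (\<lambda>(a,b). x a * cnj (x b)) $$ (a,b) * v b) = of_real ((cmod \<alpha>)^2)" .
  show "let q = (\<Sum>a<n. \<Sum>b<n. cnj (v a) * mat n n (\<lambda>(a,b). x a * cnj (x b)) $$ (a,b) * v b) in Im q = 0 \<and> Re q \<ge> 0"
    unfolding q Let_def by simp
next
  have "(\<Sum>a<n. mat n n (\<lambda>(a,b). x a * cnj (x b)) $$ (a,a)) = (\<Sum>a<n. of_real ((cmod (x a))^2))"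
    by (intro sum.cong refl) (simp, metis complex_norm_square of_real_power)
  also have "\<dots> = 1" using x by (metis of_real_1 of_real_sum)
  finally show "(\<Sum>a<n. mat n n (\<lambda>(a,b). x a * cnj (x b)) $$ (a,a)) = 1" .
qed

lemma separableI_fin:
  fixes S :: "'x set"
  assumes S: "finite S" and w0: "\<And>x. x \<in> S \<Longrightarrow> w x \<ge> 0" and w1: "(\<Sum>x\<in>S. w x) = 1"
    and st: "\<And>x. x \<in> S \<Longrightarrow> is_state n (A x) \<and> is_state n (B x)"
    and rho: "\<rho> = mat (n*n) (n*n) (\<lambda>(r,c). \<Sum>x\<in>S. complex_of_real (w x) * kron (A x) (B x) $$ (r,c))"
  shows "separable n \<rho>"
proof -
  obtain h where h: "bij_betw h {0..<card S} S" using ex_bij_betw_nat_finite[OF S] by blast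
  have hs: "(\<Sum>k<card S. g (h k)) = (\<Sum>x\<in>S. g x)" for g :: "'x \<Rightarrow> 'b::comm_monoid_add"
    using sum.reindex_bij_betw[OF h, of g] by (simp add: lessThan_atLeast0)
  have hm: "k < card S \<Longrightarrow> h k \<in> S" for k using h by (auto simp: bij_betw_def)
  have r2: "\<rho> = mat (n*n) (n*n) (\<lambda>(r,c). \<Sum>k<card S. complex_of_real ((w \<circ> h) k) * kron ((A \<circ> h) k) ((B \<circ> h) k) $$ (r,c))"
    unfolding rho
  proof (rule eq_matI)
    fix i j assume "i < dim_row (mat (n*n) (n*n) (\<lambda>(r,c). \<Sum>k<card S. complex_of_real ((w \<circ> h) k) * kron ((A \<circ> h) k) ((B \<circ> h) k) $$ (r,c)))"
       "j < dim_col (mat (n*n) (n*n) (\<lambda>(r,c). \<Sum>k<card S. complex_of_real ((w \<circ> h) k) * kron ((A \<circ> h) k) ((B \<circ> h) k) $$ (r,c)))"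
    thus "mat (n*n) (n*n) (\<lambda>(r,c). \<Sum>x\<in>S. complex_of_real (w x) * kron (A x) (B x) $$ (r,c)) $$ (i,j)
       = mat (n*n) (n*n) (\<lambda>(r,c). \<Sum>k<card S. complex_of_real ((w \<circ> h) k) * kron ((A \<circ> h) k) ((B \<circ> h) k) $$ (r,c)) $$ (i,j)"
      using hs[of "\<lambda>x. complex_of_real (w x) * kron (A x) (B x) $$ (i,j)"] by simp
  qed auto
  have w1': "(\<Sum>k<card S. (w \<circ> h) k) = 1" using hs[of w] w1 by simp
  show ?thesis unfolding separable_def
    apply (rule exI[of _ "card S"], rule exI[of _ "w \<circ> h"], rule exI[of _ "A \<circ> h"], rule exI[of _ "B \<circ> h"])
    using w0 st hm r2 w1' by auto
qed

definition om :: "nat \<Rightarrow> nat \<Rightarrow> nat \<Rightarrow> complex" where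
  "om N t i = cis (2 * pi * real t * real (4^i) / real N)"

lemma om_prod:
  "om N t a * cnj (om N t a') * cnj (om N t b) * om N t b'
   = cis (2 * pi * real t * real_of_int (int (4^a) - int (4^a') - int (4^b) + int (4^b')) / real N)"
  unfolding om_def cis_cnj cis_mult
  by (intro arg_cong[where f=cis]) (simp add: diff_divide_distrib add_divide_distrib algebra_simps)

lemma pow4_lt: "x < n \<Longrightarrow> 4 * (4::nat)^x \<le> 4^n"
proof -
  assume "x < n"
  hence "(4::nat)^(Suc x) \<le> 4^n" by (intro power_increasing) auto
  thus ?thesis by simp
qed

lemma twirl_sum:
  assumes "a < n" "a' < n" "b < n" "b' < n"
  shows "(\<Sum>t<4^n. om (4^n) t a * cnj (om (4^n) t a') * cnj (om (4^n) t b) * om (4^n) t b')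
     = (if (a = a' \<and> b = b') \<or> (a = b \<and> a' = b') then of_nat (4^n) else 0)"
proof -
  define e where "e = int (4^a) - int (4^a') - int (4^b) + int (4^b')"
  have b1: "4 * (4::nat)^a \<le> 4^n" "4 * (4::nat)^a' \<le> 4^n" "4 * (4::nat)^b \<le> 4^n" "4 * (4::nat)^b' \<le> 4^n"
    using assms pow4_lt by auto
  have pos: "(4::nat)^n > 0" by simp
  have eb: "\<bar>e\<bar> < int (4^n)" unfolding e_def using b1 pos by linarith
  have "(\<Sum>t<4^n. om (4^n) t a * cnj (om (4^n) t a') * cnj (om (4^n) t b) * om (4^n) t b')
      = (\<Sum>t<4^n. cis (2 * pi * real t * real_of_int e / real (4^n)))"
    unfolding om_prod e_def ..
  also have "\<dots> = (if e = 0 then of_nat (4^n) else 0)" by (rule cis_sum_root[OF pos eb])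
  also have "(e = 0) = ((a = a' \<and> b = b') \<or> (a = b \<and> a' = b'))"
  proof
    assume "e = 0"
    hence "(4::nat)^a + 4^b' = 4^a' + 4^b" unfolding e_def by linarith
    from pow4_eq[OF this] show "(a = a' \<and> b = b') \<or> (a = b \<and> a' = b')" by auto
  next
    assume "(a = a' \<and> b = b') \<or> (a = b \<and> a' = b')"
    thus "e = 0" unfolding e_def by auto
  qed
  finally show ?thesis .
qed

definition rk1 :: "nat \<Rightarrow> (nat \<Rightarrow> complex) \<Rightarrow> complex mat" where
  "rk1 n x = mat n n (\<lambda>(a,b). x a * cnj (x b))"

lemma rk1_idx: "a < n \<Longrightarrow> b < n \<Longrightarrow> rk1 n x $$ (a,b) = x a * cnj (x b)"
  unfolding rk1_def by simp

lemma rk1_carrier: "rk1 n x \<in> carrier_mat n n" unfolding rk1_def by simp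

lemma part1_entry:
  assumes ab: "a < n" "a' < n" "b < n" "b' < n"
    and HL: "\<forall>a<n. \<forall>b<n. H$$(a,b) = (\<Sum>q<length L. of_real (fst (L!q)) * snd (L!q) a * cnj (snd (L!q) b))"
  shows "(\<Sum>(q,t)\<in>{..<length L}\<times>{..<4^n}. complex_of_real (fst (L!q) * real n / real ((4::nat)^n)) *
      (rk1 n (\<lambda>i. snd (L!q) i * om (4^n) t i) $$ (a,a') * rk1 n (\<lambda>k. of_real (1/sqrt (real n)) * cnj (om (4^n) t k)) $$ (b,b')))
     = (if (a = a' \<and> b = b') \<or> (a = b \<and> a' = b') then H$$(a,a') else 0)"
proof -
  define N where "N = (4::nat)^n"
  define cond where "cond = ((a = a' \<and> b = b') \<or> (a = b \<and> a' = b'))"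
  have n0: "real n > 0" using ab by simp
  have N0: "real N > 0" unfolding N_def by simp
  have inner: "(\<Sum>t<N. complex_of_real (fst (L!q) * real n / real N) *
      (rk1 n (\<lambda>i. snd (L!q) i * om N t i) $$ (a,a') * rk1 n (\<lambda>k. of_real (1/sqrt (real n)) * cnj (om N t k)) $$ (b,b')))
      = (if cond then of_real (fst (L!q)) * snd (L!q) a * cnj (snd (L!q) a') else 0)" for q
  proof -
    define l where "l = fst (L!q)"
    define u where "u = snd (L!q)"
    have sc: "complex_of_real (l * real n / real N) * (of_real (1/sqrt (real n)) * of_real (1/sqrt (real n)))
       = of_real (l / real N)"
    proof -
      have "l * real n / real N * (1/sqrt (real n) * (1/sqrt (real n))) = l / real N"
        using n0 by (simp add: field_simps)
      thus ?thesis by (metis of_real_mult)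
    qed
    have "(\<Sum>t<N. complex_of_real (l * real n / real N) *
      (rk1 n (\<lambda>i. u i * om N t i) $$ (a,a') * rk1 n (\<lambda>k. of_real (1/sqrt (real n)) * cnj (om N t k)) $$ (b,b')))
      = (\<Sum>t<N. of_real (l / real N) * (u a * cnj (u a')) * (om N t a * cnj (om N t a') * cnj (om N t b) * om N t b'))"
    proof (intro sum.cong refl)
      fix t
      have "complex_of_real (l * real n / real N) *
        (rk1 n (\<lambda>i. u i * om N t i) $$ (a,a') * rk1 n (\<lambda>k. of_real (1/sqrt (real n)) * cnj (om N t k)) $$ (b,b'))
        = (complex_of_real (l * real n / real N) * (of_real (1/sqrt (real n)) * of_real (1/sqrt (real n))))
          * (u a * cnj (u a')) * (om N t a * cnj (om N t a') * cnj (om N t b) * om N t b')"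
        using ab by (simp add: rk1_idx ac_simps)
      thus "complex_of_real (l * real n / real N) *
        (rk1 n (\<lambda>i. u i * om N t i) $$ (a,a') * rk1 n (\<lambda>k. of_real (1/sqrt (real n)) * cnj (om N t k)) $$ (b,b'))
        = of_real (l / real N) * (u a * cnj (u a')) * (om N t a * cnj (om N t a') * cnj (om N t b) * om N t b')"
        unfolding sc .
    qed
    also have "\<dots> = of_real (l / real N) * (u a * cnj (u a')) * (\<Sum>t<N. om N t a * cnj (om N t a') * cnj (om N t b) * om N t b')"
      by (simp add: sum_distrib_left)
    also have "(\<Sum>t<N. om N t a * cnj (om N t a') * cnj (om N t b) * om N t b') = (if cond then of_nat N else 0)"
      unfolding N_def cond_def by (rule twirl_sum[OF ab])
    also have "of_real (l / real N) * (u a * cnj (u a')) * (if cond then of_nat N else 0)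
       = (if cond then of_real l * u a * cnj (u a') else 0)"
      using N0 by (auto simp: field_simps)
    finally show ?thesis unfolding l_def u_def .
  qed
  have "(\<Sum>(q,t)\<in>{..<length L}\<times>{..<N}. complex_of_real (fst (L!q) * real n / real N) *
      (rk1 n (\<lambda>i. snd (L!q) i * om N t i) $$ (a,a') * rk1 n (\<lambda>k. of_real (1/sqrt (real n)) * cnj (om N t k)) $$ (b,b')))
     = (\<Sum>q<length L. \<Sum>t<N. complex_of_real (fst (L!q) * real n / real N) *
      (rk1 n (\<lambda>i. snd (L!q) i * om N t i) $$ (a,a') * rk1 n (\<lambda>k. of_real (1/sqrt (real n)) * cnj (om N t k)) $$ (b,b')))"
    by (rule sum.cartesian_product[symmetric])
  also have "\<dots> = (\<Sum>q<length L. if cond then of_real (fst (L!q)) * snd (L!q) a * cnj (snd (L!q) a') else 0)"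
    by (intro sum.cong refl inner)
  also have "\<dots> = (if cond then H$$(a,a') else 0)" using HL ab by simp
  finally show ?thesis unfolding N_def cond_def .
qed


lemma part2_entry:
  assumes ab: "a < n" "a' < n" "b < n" "b' < n"
  shows "(\<Sum>(i,k)\<in>{..<n}\<times>{..<n}. complex_of_real (if i \<noteq> k then c else 0) *
      (rk1 n (\<lambda>x. if x = i then 1 else 0) $$ (a,a') * rk1 n (\<lambda>x. if x = k then 1 else 0) $$ (b,b')))
     = (if a = a' \<and> b = b' \<and> a \<noteq> b then of_real c else 0)"
proof -
  have "(\<Sum>(i,k)\<in>{..<n}\<times>{..<n}. complex_of_real (if i \<noteq> k then c else 0) *
      (rk1 n (\<lambda>x. if x = i then 1 else 0) $$ (a,a') * rk1 n (\<lambda>x. if x = k then 1 else 0) $$ (b,b')))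
     = (\<Sum>i<n. \<Sum>k<n. complex_of_real (if i \<noteq> k then c else 0) *
      (rk1 n (\<lambda>x. if x = i then 1 else 0) $$ (a,a') * rk1 n (\<lambda>x. if x = k then 1 else 0) $$ (b,b')))"
    by (rule sum.cartesian_product[symmetric])
  also have "\<dots> = (\<Sum>i<n. \<Sum>k<n. if i = a \<and> k = b then (if a = a' \<and> b = b' \<and> a \<noteq> b then of_real c else 0) else 0)"
    using ab by (intro sum.cong refl) (auto simp: rk1_idx)
  also have "\<dots> = (if a = a' \<and> b = b' \<and> a \<noteq> b then of_real c else 0)"
    using ab(1,3) by (rule sum_if_conj)
  finally show ?thesis .
qed


theorem mainTheorem6:
  fixes n :: nat and z :: "nat \<Rightarrow> nat \<Rightarrow> complex" and lam :: real
  assumes n2: "n \<ge> 2"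
    and unimod: "\<And>i j. i < j \<Longrightarrow> j < n \<Longrightarrow> cmod (z i j) = 1"
    and herm: "\<And>i j. i < j \<Longrightarrow> j < n \<Longrightarrow> z j i = cnj (z i j)"
    and lam_eig: "eigenvalue (W_mat n z) (complex_of_real lam)"
    and lam_min: "\<And>\<mu>. eigenvalue (W_mat n z) \<mu> \<Longrightarrow> lam \<le> Re \<mu>"
    and lam_neg: "lam < 0"
  shows "separable n (W_tilde n z (1 / (1 + (real n)^2 * \<bar>lam\<bar>)))"
proof -
  define p where "p = 1 / (1 + (real n)^2 * \<bar>lam\<bar>)"
  define d where "d = (1-p)/(real n)^2"
  define c where "c = p / (real n * (real n - 1))"
  define N where "N = (4::nat)^n"
  have nr: "real n - 1 > 0" "real n > 0" using n2 by auto
  have den: "1 + (real n)^2 * \<bar>lam\<bar> > 0" by (simp add: add_pos_nonneg)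
  have ppos: "p > 0" unfolding p_def using den by simp
  have p1: "p \<le> 1" unfolding p_def using den by (simp add: field_simps)
  have cpos: "c \<ge> 0" unfolding c_def using ppos nr by simp
  have dpos: "d \<ge> 0" unfolding d_def using p1 by simp
  define H where "H = Hm n z d c"
  have Zh: "Zm n z a b = cnj (Zm n z b a)" if "a < n" "b < n" for a b
  proof -
    consider "a = b" | "a < b" | "b < a" by linarith
    thus ?thesis
    proof cases
      case 2 thus ?thesis unfolding Zm_def using herm[OF 2 that(2)] by simp
    next
      case 3 thus ?thesis unfolding Zm_def using herm[OF 3 that(1)] by simp
    qed (simp add: Zm_def)
  qed
  have Hh: "herm n H" unfolding herm_def H_def Hm_def
  proof (intro conjI allI impI)
    fix a b assume ab: "a < n" "b < n"
    show "mat n n (\<lambda>(i,j). complex_of_real d * (if i = j then 1 else 0) - complex_of_real c * Zm n z i j) $$ (a,b)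
      = cnj (mat n n (\<lambda>(i,j). complex_of_real d * (if i = j then 1 else 0) - complex_of_real c * Zm n z i j) $$ (b,a))"
    proof -
      have "cnj (Zm n z b a) = Zm n z a b" using Zh[OF ab] by simp
      thus ?thesis using ab by auto
    qed
  qed simp
  obtain L where L: "spinv n H L"
    and HL: "\<forall>a<n. \<forall>b<n. H$$(a,b) = (\<Sum>q<length L. of_real (fst (L!q)) * snd (L!q) a * cnj (snd (L!q) b))"
    using spectral[OF Hh] by blast
  have unit: "(\<Sum>a<n. (cmod (snd (L!q) a))^2) = 1" if q: "q < length L" for q
  proof -
    have "ipr n (snd (L!q)) (snd (L!q)) = 1" using L q unfolding spinv_def by auto
    thus ?thesis unfolding ipr_self by (metis of_real_eq_1_iff)
  qed
  have lpos: "fst (L!q) \<ge> 0" if q: "q < length L" for q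
  proof -
    obtain a0 where a0: "a0 < n" "snd (L!q) a0 \<noteq> 0"
    proof (rule ccontr)
      assume "\<not> thesis"
      with that have "\<forall>a<n. snd (L!q) a = 0" by blast
      hence "(\<Sum>a<n. (cmod (snd (L!q) a))^2) = 0" by simp
      with unit[OF q] show False by simp
    qed
    have ev: "eigp n (Hm n z ((1-p)/(real n)^2) (p / (real n * (real n - 1)))) (fst (L!q)) (snd (L!q))"
      using L q unfolding spinv_def H_def d_def c_def by auto
    show ?thesis by (rule eig_transfer[OF n2 lam_min lam_neg p_def ev a0])
  qed
  have Hdiag: "H$$(a,a) = of_real d" if "a < n" for a
    unfolding H_def Hm_def Zm_def using that by simp
  have trsum: "(\<Sum>q<length L. fst (L!q)) = real n * d"
  proof -
    have "complex_of_real (real n * d) = (\<Sum>a<n. H$$(a,a))" using Hdiag by simp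
    also have "\<dots> = (\<Sum>a<n. \<Sum>q<length L. of_real (fst (L!q)) * of_real ((cmod (snd (L!q) a))^2))"
    proof (intro sum.cong refl)
      fix a assume "a \<in> {..<n}"
      hence "H$$(a,a) = (\<Sum>q<length L. of_real (fst (L!q)) * snd (L!q) a * cnj (snd (L!q) a))" using HL by simp
      also have "\<dots> = (\<Sum>q<length L. of_real (fst (L!q)) * of_real ((cmod (snd (L!q) a))^2))"
        by (intro sum.cong refl) (simp only: mult.assoc complex_norm_square)
      finally show "H$$(a,a) = \<dots>" .
    qed
    also have "\<dots> = (\<Sum>q<length L. of_real (fst (L!q)) * of_real (\<Sum>a<n. (cmod (snd (L!q) a))^2))"
      by (subst sum.swap) (simp add: sum_distrib_left of_real_sum)
    also have "\<dots> = (\<Sum>q<length L. of_real (fst (L!q)))" using unit by simp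
    finally show ?thesis by (metis of_real_eq_iff of_real_sum)
  qed
  define S where "S = ({..<length L} \<times> {..<N}) <+> ({..<n} \<times> {..<n})"
  define w :: "nat \<times> nat + nat \<times> nat \<Rightarrow> real" where "w = case_sum (\<lambda>(q,t). fst (L!q) * real n / real N) (\<lambda>(i,k). if i \<noteq> k then c else 0)"
  define A :: "nat \<times> nat + nat \<times> nat \<Rightarrow> complex mat" where "A = case_sum (\<lambda>(q,t). rk1 n (\<lambda>i. snd (L!q) i * om N t i)) (\<lambda>(i,k). rk1 n (\<lambda>x. if x = i then 1 else 0))"
  define B :: "nat \<times> nat + nat \<times> nat \<Rightarrow> complex mat" where "B = case_sum (\<lambda>(q,t). rk1 n (\<lambda>k. of_real (1/sqrt (real n)) * cnj (om N t k))) (\<lambda>(i,k). rk1 n (\<lambda>x. if x = k then 1 else 0))"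
  have finS: "finite S" unfolding S_def by simp
  have omu: "cmod (om N t i) = 1" for t i unfolding om_def by simp
  have dl: "(\<Sum>a<n. (cmod (if a = i then 1 else 0 :: complex))^2) = 1" if "i < n" for i
  proof -
    have "(\<Sum>a<n. (cmod (if a = i then 1 else 0 :: complex))^2) = (\<Sum>a<n. if a = i then 1 else 0)"
      by (intro sum.cong refl) auto
    thus ?thesis using that by simp
  qed
  show ?thesis unfolding p_def[symmetric]
  proof (rule separableI_fin[OF finS, where w = w and A = A and B = B])
    fix x assume "x \<in> S"
    then consider q t where "x = Inl (q,t)" "q < length L" | i k where "x = Inr (i,k)"
      unfolding S_def by auto
    thus "w x \<ge> 0"
    proof cases
      case 1 thus ?thesis unfolding w_def using lpos[OF 1(2)] by simp
    next
      case 2 thus ?thesis unfolding w_def using cpos by simp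
    qed
  next
    have "(\<Sum>x\<in>S. w x) = (\<Sum>(q,t)\<in>{..<length L} \<times> {..<N}. fst (L!q) * real n / real N) + (\<Sum>(i,k)\<in>{..<n} \<times> {..<n}. if i \<noteq> k then c else 0)"
      unfolding S_def by (subst sum.Plus) (auto simp: w_def comp_def)
    also have "(\<Sum>(q,t)\<in>{..<length L} \<times> {..<N}. fst (L!q) * real n / real N) = (\<Sum>q<length L. \<Sum>t<N. fst (L!q) * real n / real N)"
      by (rule sum.cartesian_product[symmetric])
    also have "\<dots> = (\<Sum>q<length L. fst (L!q) * real n)" unfolding N_def by simp
    also have "\<dots> = (\<Sum>q<length L. fst (L!q)) * real n" by (rule sum_distrib_right[symmetric])
    also have "\<dots> = real n * real n * d" unfolding trsum by simp
    also have "(\<Sum>(i,k)\<in>{..<n} \<times> {..<n}. if i \<noteq> k then c else 0) = (\<Sum>i<n. \<Sum>k<n. if i \<noteq> k then c else 0)"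
      by (rule sum.cartesian_product[symmetric])
    also have "\<dots> = (\<Sum>i<n. (real n - 1) * c)"
    proof (intro sum.cong refl)
      fix i assume i: "i \<in> {..<n}"
      have "(\<Sum>k<n. if i \<noteq> k then c else 0) = (\<Sum>k\<in>{..<n} - {i}. c)"
      proof -
        have "(\<Sum>k<n. if i \<noteq> k then c else 0) = (\<Sum>k<n. c - (if k = i then c else 0))"
          by (intro sum.cong refl) auto
        also have "\<dots> = (\<Sum>k<n. c) - (\<Sum>k<n. if k = i then c else 0)" by (rule sum_subtractf)
        finally show ?thesis using i by (simp add: algebra_simps)
      qed
      also have "\<dots> = (real n - 1) * c" using i by simp
      finally show "(\<Sum>k<n. if i \<noteq> k then c else 0) = (real n - 1) * c" .
    qed
    also have "real n * real n * d + (\<Sum>i<n. (real n - 1) * c) = 1"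
    proof -
      have e1: "real n * real n * d = 1 - p" unfolding d_def using nr by (simp add: power2_eq_square)
      have e2: "(\<Sum>i<n. (real n - 1) * c) = p" unfolding c_def using nr by simp
      show ?thesis unfolding e1 e2 by simp
    qed
    finally show "(\<Sum>x\<in>S. w x) = 1" .
  next
    fix x assume x: "x \<in> S"
    show "is_state n (A x) \<and> is_state n (B x)"
    proof (cases x)
      case (Inl qt)
      then obtain q t where qt: "x = Inl (q,t)" "q < length L" using x unfolding S_def by auto
      have u1: "(\<Sum>i<n. (cmod (snd (L!q) i * om N t i))^2) = 1" using unit[OF qt(2)] by (simp add: norm_mult omu)
      have u2: "(\<Sum>k<n. (cmod (complex_of_real (1/sqrt (real n)) * cnj (om N t k)))^2) = 1"
      proof -
        have "(cmod (complex_of_real (1/sqrt (real n)) * cnj (om N t k)))^2 = 1 / real n" for k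
        proof -
          have "cmod (complex_of_real (1/sqrt (real n)) * cnj (om N t k)) = 1 / sqrt (real n)"
            by (simp only: norm_mult complex_mod_cnj omu norm_of_real) (simp add: abs_div)
          thus ?thesis using nr by (simp add: power_divide)
        qed
        thus ?thesis using nr by simp
      qed
      show ?thesis unfolding qt A_def B_def rk1_def using rank1_state[OF u1] rank1_state[OF u2] by simp
    next
      case (Inr ik)
      then obtain i k where ik: "x = Inr (i,k)" "i < n" "k < n" using x unfolding S_def by auto
      show ?thesis unfolding ik A_def B_def rk1_def using rank1_state dl ik by simp
    qed
  next
    have key: "(\<Sum>x\<in>S. complex_of_real (w x) * kron (A x) (B x) $$ (a*n+b, a'*n+b')) = W_tilde n z p $$ (a*n+b, a'*n+b')"
      if ab: "a < n" "a' < n" "b < n" "b' < n" for a a' b b'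
    proof -
      define cond where "cond = ((a = a' \<and> b = b') \<or> (a = b \<and> a' = b'))"
      have P1: "(\<Sum>y\<in>{..<length L}\<times>{..<N}. complex_of_real (w (Inl y)) * kron (A (Inl y)) (B (Inl y)) $$ (a*n+b, a'*n+b'))
          = (if cond then H$$(a,a') else 0)"
      proof -
        have "(\<Sum>y\<in>{..<length L}\<times>{..<N}. complex_of_real (w (Inl y)) * kron (A (Inl y)) (B (Inl y)) $$ (a*n+b, a'*n+b'))
          = (\<Sum>(q,t)\<in>{..<length L}\<times>{..<4^n}. complex_of_real (fst (L!q) * real n / real ((4::nat)^n)) *
             (rk1 n (\<lambda>i. snd (L!q) i * om (4^n) t i) $$ (a,a') * rk1 n (\<lambda>k. of_real (1/sqrt (real n)) * cnj (om (4^n) t k)) $$ (b,b')))"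
          unfolding N_def using ab by (intro sum.cong refl) (auto simp: w_def A_def B_def kron_idx[where n=n] rk1_carrier N_def)
        also have "\<dots> = (if cond then H$$(a,a') else 0)" unfolding cond_def by (rule part1_entry[OF ab HL])
        finally show ?thesis .
      qed
      have P2: "(\<Sum>y\<in>{..<n}\<times>{..<n}. complex_of_real (w (Inr y)) * kron (A (Inr y)) (B (Inr y)) $$ (a*n+b, a'*n+b'))
          = (if a = a' \<and> b = b' \<and> a \<noteq> b then of_real c else 0)"
      proof -
        have "(\<Sum>y\<in>{..<n}\<times>{..<n}. complex_of_real (w (Inr y)) * kron (A (Inr y)) (B (Inr y)) $$ (a*n+b, a'*n+b'))
          = (\<Sum>(i,k)\<in>{..<n}\<times>{..<n}. complex_of_real (if i \<noteq> k then c else 0) *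
            (rk1 n (\<lambda>x. if x = i then 1 else 0) $$ (a,a') * rk1 n (\<lambda>x. if x = k then 1 else 0) $$ (b,b')))"
          using ab by (intro sum.cong refl) (auto simp: w_def A_def B_def kron_idx[where n=n] rk1_carrier)
        also have "\<dots> = (if a = a' \<and> b = b' \<and> a \<noteq> b then of_real c else 0)" by (rule part2_entry[OF ab])
        finally show ?thesis .
      qed
      have "(\<Sum>x\<in>S. complex_of_real (w x) * kron (A x) (B x) $$ (a*n+b, a'*n+b'))
        = (if cond then H$$(a,a') else 0) + (if a = a' \<and> b = b' \<and> a \<noteq> b then of_real c else 0)"
        unfolding S_def by (subst sum.Plus) (auto simp: comp_def P1 P2)
      also have "H$$(a,a') = of_real d * (if a = a' then 1 else 0) - of_real c * Zm n z a a'"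
        unfolding H_def Hm_def using ab by simp
      also have "W_tilde n z p $$ (a*n+b, a'*n+b') =
         of_real d * (if a = a' \<and> b = b' then 1 else 0)
         + of_real c * (if a = a' then (if b = b' \<and> b \<noteq> a then 1 else 0)
          else (if b = a \<and> b' = a' then - z a a' else 0))"
        unfolding d_def c_def by (rule Wt_idx[OF n2 ab])
      ultimately show ?thesis unfolding cond_def Zm_def
        by (cases "a = a'"; cases "b = b'"; cases "a = b"; cases "a' = b'") auto
    qed
    show "W_tilde n z p = mat (n*n) (n*n) (\<lambda>(r,c'). \<Sum>x\<in>S. complex_of_real (w x) * kron (A x) (B x) $$ (r,c'))"
    proof (rule eq_matI)
      show "dim_row (W_tilde n z p) = dim_row (mat (n*n) (n*n) (\<lambda>(r,c'). \<Sum>x\<in>S. complex_of_real (w x) * kron (A x) (B x) $$ (r,c')))"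
        by (simp add: W_tilde_def W_mat_def)
      show "dim_col (W_tilde n z p) = dim_col (mat (n*n) (n*n) (\<lambda>(r,c'). \<Sum>x\<in>S. complex_of_real (w x) * kron (A x) (B x) $$ (r,c')))"
        by (simp add: W_tilde_def W_mat_def)
      fix i j assume "i < dim_row (mat (n*n) (n*n) (\<lambda>(r,c'). \<Sum>x\<in>S. complex_of_real (w x) * kron (A x) (B x) $$ (r,c')))"
        "j < dim_col (mat (n*n) (n*n) (\<lambda>(r,c'). \<Sum>x\<in>S. complex_of_real (w x) * kron (A x) (B x) $$ (r,c')))"
      hence ij: "i < n*n" "j < n*n" by auto
      define a b a' b' where "a = i div n" and "b = i mod n" and "a' = j div n" and "b' = j mod n"
      have abi: "a < n" "b < n" "i = a*n+b" "a' < n" "b' < n" "j = a'*n+b'"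
        unfolding a_def b_def a'_def b'_def using ij n2 div_mult_mod_eq[of i n] div_mult_mod_eq[of j n]
        by (auto simp: less_mult_imp_div_less)
      show "W_tilde n z p $$ (i,j) = mat (n*n) (n*n) (\<lambda>(r,c'). \<Sum>x\<in>S. complex_of_real (w x) * kron (A x) (B x) $$ (r,c')) $$ (i,j)"
        using ij key[OF abi(1,4,2,5)] abi(3,6) by simp
    qed

  qed
qed

end
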